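(* Let $U$ be a universal Turing machine and define $$\Upsilon_U=\sum_{i\ge 1}\frac{2^{-i}}{t_{\mathrm{bin}(i)}}\,,$$ with the convention that a term equals $0$ when $t_{\mathrm{bin}(i)}=\infty$. Then $0<\Upsilon_U<1$, and $\Upsilon_U$ is a computable real number: there is an algorithm which, given $n\ge 1$, outputs a rational number within $2^{-n}$ of $\Upsilon_U$.
   Context: Strings are binary. $\Sigma^*$ denotes the set of binary strings, and $\mathbf{N}=\{1,2,\dots\}$. The map $\mathrm{bin}:\mathbf{N}\to\Sigma^*$ is the computable bijection sending $n$ to its binary expansion with the leading $1$ removed. For example, $\mathrm{bin}(1)=\lambda$ (the empty string), $\mathrm{bin}(2)=0$, $\mathrm{bin}(3)=1$, $\mathrm{bin}(4)=00$. For a program $p$, $t_p\in\mathbf{N}\cup\{\infty\}$ is the exact number of steps after which $U(p)$ halts, with $t_p=\infty$ if $U(p)$ never halts. Halting times are at least $1$. $U$ is universal, so in particular some program halts on $U$ and some program does not halt on $U$. *)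

theory Defs
  imports Complex_Main "HOL-Library.Extended_Nat"
begin

text \<open>Binary strings are lists of booleans (False = 0, True = 1).
  bin n is the binary expansion of n with the leading 1 removed (for n \<ge> 1).\<close>

fun bin :: "nat \<Rightarrow> bool list" where
  "bin n = (if n \<le> 1 then [] else bin (n div 2) @ [odd n])"

text \<open>Inverse of bin: the numeral code of a string s is the number with binary
  expansion 1s.  Machines receive their program through this code.\<close>

definition prog_code :: "bool list \<Rightarrow> nat" where
  "prog_code s = foldl (\<lambda>a b. 2 * a + (if b then 1 else 0)) 1 s"

datatype recf = Zero | Succ | Proj nat | Comp recf "recf list" | Prim recf recf | Mn recf

inductive eval :: "recf \<Rightarrow> nat list \<Rightarrow> nat \<Rightarrow> bool" where
  eval_Zero: "eval Zero xs 0"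
| eval_Succ: "eval Succ [x] (Suc x)"
| eval_Proj: "i < length xs \<Longrightarrow> eval (Proj i) xs (xs ! i)"
| eval_Comp: "list_all2 (\<lambda>g y. eval g xs y) gs ys \<Longrightarrow> eval f ys z \<Longrightarrow> eval (Comp f gs) xs z"
| eval_Prim0: "eval f xs z \<Longrightarrow> eval (Prim f g) (0 # xs) z"
| eval_PrimS: "eval (Prim f g) (n # xs) r \<Longrightarrow> eval g (n # r # xs) z \<Longrightarrow> eval (Prim f g) (Suc n # xs) z"
| eval_Mn: "eval f (y # xs) 0 \<Longrightarrow> (\<forall>k<y. \<exists>v. eval f (k # xs) v \<and> v \<noteq> 0) \<Longrightarrow> eval (Mn f) xs y"

definition computable1 :: "(nat \<Rightarrow> nat) \<Rightarrow> bool" where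
  "computable1 f \<longleftrightarrow> (\<exists>r. \<forall>n. eval r [n] (f n))"

definition computable_real :: "real \<Rightarrow> bool" where
  "computable_real x \<longleftrightarrow>
     (\<exists>a b d. computable1 a \<and> computable1 b \<and> computable1 d \<and>
        (\<forall>n\<ge>1. d n > 0 \<and> \<bar>(real (a n) - real (b n)) / real (d n) - x\<bar> \<le> (1/2) ^ n))"

text \<open>A machine U is given by computable functions on (codes of) configurations:
  init (initial configuration for the program with code prog_code p), step (one
  transition) and halt (nonzero iff the configuration is halting).  Any Turing
  machine is of this form.  t_p is the number of steps after which U(p) halts.\<close>

definition halts_after :: "(nat \<Rightarrow> nat) \<Rightarrow> (nat \<Rightarrow> nat) \<Rightarrow> (nat \<Rightarrow> nat) \<Rightarrow> bool list \<Rightarrow> nat \<Rightarrow> bool" where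
  "halts_after init step halt p k \<longleftrightarrow> halt ((step ^^ k) (init (prog_code p))) \<noteq> 0"

definition htime :: "(nat \<Rightarrow> nat) \<Rightarrow> (nat \<Rightarrow> nat) \<Rightarrow> (nat \<Rightarrow> nat) \<Rightarrow> bool list \<Rightarrow> enat" where
  "htime init step halt p =
     (if \<exists>k. halts_after init step halt p k
      then enat (LEAST k. halts_after init step halt p k) else \<infinity>)"

definition Upsilon :: "(nat \<Rightarrow> nat) \<Rightarrow> (nat \<Rightarrow> nat) \<Rightarrow> (nat \<Rightarrow> nat) \<Rightarrow> real" where
  "Upsilon init step halt =
     (\<Sum>j. (case htime init step halt (bin (Suc j)) of
              enat k \<Rightarrow> (1/2) ^ Suc j / real k
            | \<infinity> \<Rightarrow> 0))"

end

theory Submission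
  imports Defs
begin


definition rc :: "nat \<Rightarrow> (nat list \<Rightarrow> nat) \<Rightarrow> bool" where
  "rc k f \<longleftrightarrow> (\<exists>r. \<forall>xs. length xs = k \<longrightarrow> eval r xs (f xs))"

lemma rc_cong: "rc k f \<Longrightarrow> (\<And>xs. length xs = k \<Longrightarrow> f xs = g xs) \<Longrightarrow> rc k g"
  unfolding rc_def by metis

lemma rc_zero: "rc k (\<lambda>_. 0)"
  unfolding rc_def by (auto intro: eval_Zero)

lemma rc_proj: "i < k \<Longrightarrow> rc k (\<lambda>xs. xs ! i)"
  unfolding rc_def by (auto intro: eval_Proj)

lemma rc_succ1: "rc (Suc 0) (\<lambda>xs. Suc (xs ! 0))"
  unfolding rc_def
proof (intro exI allI impI)
  fix xs :: "nat list" assume "length xs = Suc 0"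
  then obtain x where "xs = [x]" by (cases xs) auto
  then show "eval Succ xs (Suc (xs ! 0))" by (auto intro: eval_Succ)
qed

lemma rc_list:
  assumes "\<forall>g\<in>set gs. rc k g"
  shows "\<exists>rs. \<forall>xs. length xs = k \<longrightarrow> list_all2 (\<lambda>r y. eval r xs y) rs (map (\<lambda>g. g xs) gs)"
  using assms
proof (induction gs)
  case Nil then show ?case by (intro exI[of _ "[]"]) auto
next
  case (Cons g gs)
  then obtain rs where rs: "\<forall>xs. length xs = k \<longrightarrow> list_all2 (\<lambda>r y. eval r xs y) rs (map (\<lambda>g. g xs) gs)" by auto
  from Cons obtain r where r: "\<forall>xs. length xs = k \<longrightarrow> eval r xs (g xs)" unfolding rc_def by auto
  show ?case using rs r by (intro exI[of _ "r # rs"]) auto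
qed

lemma rc_comp:
  assumes "rc m f" "length gs = m" "\<forall>g\<in>set gs. rc k g"
  shows "rc k (\<lambda>xs. f (map (\<lambda>g. g xs) gs))"
proof -
  obtain rs where rs: "\<forall>xs. length xs = k \<longrightarrow> list_all2 (\<lambda>r y. eval r xs y) rs (map (\<lambda>g. g xs) gs)"
    using rc_list[OF assms(3)] by auto
  obtain r where r: "\<forall>xs. length xs = m \<longrightarrow> eval r xs (f xs)" using assms(1) unfolding rc_def by auto
  show ?thesis unfolding rc_def
    by (rule exI[of _ "Comp r rs"]) (use rs r assms(2) in \<open>auto intro: eval_Comp\<close>)
qed

lemma rc_comp1: "rc (Suc 0) f \<Longrightarrow> rc k g \<Longrightarrow> rc k (\<lambda>xs. f [g xs])"
  using rc_comp[of 1 f "[g]" k] by auto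

lemma rc_comp2: "rc (Suc (Suc 0)) f \<Longrightarrow> rc k g1 \<Longrightarrow> rc k g2 \<Longrightarrow> rc k (\<lambda>xs. f [g1 xs, g2 xs])"
  using rc_comp[of "Suc (Suc 0)" f "[g1, g2]" k] by auto

lemma rc_reindex:
  assumes "rc m f" "\<forall>i<m. \<sigma> i < k"
  shows "rc k (\<lambda>ys. f (map (\<lambda>i. ys ! \<sigma> i) [0..<m]))"
proof -
  have "rc k (\<lambda>ys. f (map (\<lambda>g. g ys) (map (\<lambda>i ys. ys ! \<sigma> i) [0..<m])))"
    using assms by (intro rc_comp) (auto intro: rc_proj)
  then show ?thesis by (simp add: comp_def)
qed

lemma rc_tl: assumes "rc k f" shows "rc (Suc k) (\<lambda>ys. f (tl ys))"
proof -
  have "rc (Suc k) (\<lambda>ys. f (map (\<lambda>i. ys ! Suc i) [0..<k]))"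
    using rc_reindex[OF assms, of Suc "Suc k"] by auto
  then show ?thesis
    by (rule rc_cong) (rule arg_cong[where f=f], auto intro!: nth_equalityI simp: nth_tl)
qed

lemma rc_prim:
  assumes "rc k f" "rc (Suc (Suc k)) g"
    and h0: "\<And>xs. length xs = k \<Longrightarrow> h (0 # xs) = f xs"
    and hS: "\<And>n xs. length xs = k \<Longrightarrow> h (Suc n # xs) = g (n # h (n # xs) # xs)"
  shows "rc (Suc k) h"
proof -
  obtain rf where rf: "\<forall>xs. length xs = k \<longrightarrow> eval rf xs (f xs)" using assms(1) unfolding rc_def by auto
  obtain rg where rg: "\<forall>xs. length xs = Suc (Suc k) \<longrightarrow> eval rg xs (g xs)" using assms(2) unfolding rc_def by auto
  have *: "eval (Prim rf rg) (n # xs) (h (n # xs))" if "length xs = k" for n xs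
  proof (induction n)
    case 0 then show ?case using rf that h0 by (auto intro: eval_Prim0)
  next
    case (Suc n) then show ?case using rg that hS by (auto intro: eval_PrimS)
  qed
  show ?thesis unfolding rc_def
  proof (intro exI allI impI)
    fix xs :: "nat list" assume "length xs = Suc k"
    then obtain n ys where "xs = n # ys" "length ys = k" by (cases xs) auto
    then show "eval (Prim rf rg) xs (h xs)" using * by auto
  qed
qed

lemma rc_cons:
  assumes "rc (Suc k) h" "rc k g"
  shows "rc k (\<lambda>xs. h (g xs # xs))"
proof -
  have "rc k (\<lambda>xs. h (map (\<lambda>g. g xs) (g # map (\<lambda>i xs. xs ! i) [0..<k])))"
    using assms by (intro rc_comp) (auto intro: rc_proj)
  then show ?thesis by (rule rc_cong) (auto simp: comp_def map_nth)
qed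

lemma rc_Suc: "rc k g \<Longrightarrow> rc k (\<lambda>xs. Suc (g xs))"
  using rc_comp1[OF rc_succ1] by simp

lemma rc_const: "rc k (\<lambda>_. c)"
  by (induction c) (auto intro: rc_zero rc_Suc)

lemma rc_add2: "rc (Suc (Suc 0)) (\<lambda>xs. xs ! 0 + xs ! 1)"
  by (rule rc_prim[where f = "\<lambda>xs. xs ! 0" and g = "\<lambda>ys. Suc (ys ! 1)" and k = "Suc 0"])
     (auto intro: rc_proj rc_Suc)

lemma rc_add: "rc k g1 \<Longrightarrow> rc k g2 \<Longrightarrow> rc k (\<lambda>xs. g1 xs + g2 xs)"
  using rc_comp2[OF rc_add2] by simp

lemma rc_mult2: "rc (Suc (Suc 0)) (\<lambda>xs. xs ! 0 * xs ! 1)"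
  by (rule rc_prim[where f = "\<lambda>xs. 0" and g = "\<lambda>ys. ys ! 2 + ys ! 1" and k = "Suc 0"])
     (auto intro!: rc_proj rc_add rc_zero)

lemma rc_mult: "rc k g1 \<Longrightarrow> rc k g2 \<Longrightarrow> rc k (\<lambda>xs. g1 xs * g2 xs)"
  using rc_comp2[OF rc_mult2] by simp

lemma rc_pred1: "rc (Suc 0) (\<lambda>xs. xs ! 0 - 1)"
  by (rule rc_prim[where f = "\<lambda>xs. 0" and g = "\<lambda>ys. ys ! 0" and k = 0])
     (auto intro!: rc_proj rc_zero)

lemma rc_pred: "rc k g \<Longrightarrow> rc k (\<lambda>xs. g xs - 1)"
  using rc_comp1[OF rc_pred1] by simp

lemma rc_sub2: "rc (Suc (Suc 0)) (\<lambda>xs. xs ! 1 - xs ! 0)"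
  by (rule rc_prim[where f = "\<lambda>xs. xs ! 0" and g = "\<lambda>ys. ys ! 1 - 1" and k = "Suc 0"])
     (use rc_pred[OF rc_proj[of "Suc 0" "Suc (Suc (Suc 0))"]] in \<open>auto intro!: rc_proj\<close>)

lemma rc_sub: "rc k g1 \<Longrightarrow> rc k g2 \<Longrightarrow> rc k (\<lambda>xs. g1 xs - g2 xs)"
  using rc_comp2[OF rc_sub2, of k g2 g1] by simp

lemma rc_pow2_1: "rc (Suc 0) (\<lambda>xs. 2 ^ (xs ! 0))"
  by (rule rc_prim[where f = "\<lambda>xs. 1" and g = "\<lambda>ys. ys ! 1 + ys ! 1" and k = 0])
     (auto intro!: rc_proj rc_const rc_add)

lemma rc_pow2: "rc k g \<Longrightarrow> rc k (\<lambda>xs. 2 ^ g xs)"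
  using rc_comp1[OF rc_pow2_1] by simp

lemma rc_if_eq:
  assumes "rc k a" "rc k b" "rc k g1" "rc k g2"
  shows "rc k (\<lambda>xs. if a xs = b xs then g1 xs else g2 xs)"
proof -
  have "rc k (\<lambda>xs. g1 xs * (1 - ((a xs - b xs) + (b xs - a xs))) + g2 xs * (1 - (1 - ((a xs - b xs) + (b xs - a xs)))))"
    using assms by (intro rc_add rc_mult rc_sub rc_const)
  then show ?thesis by (rule rc_cong) auto
qed

lemma rc_sum:
  assumes "rc (Suc k) f" "rc k g"
  shows "rc k (\<lambda>xs. \<Sum>j<g xs. f (j # xs))"
proof -
  have f2: "rc (Suc (Suc k)) (\<lambda>ys. f (ys ! 0 # tl (tl ys)))"
  proof -
    have "rc (Suc (Suc k)) (\<lambda>ys. f (map (\<lambda>i. ys ! (if i = 0 then 0 else Suc i)) [0..<Suc k]))"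
      by (rule rc_reindex[OF assms(1)]) auto
    then show ?thesis
      by (rule rc_cong) (rule arg_cong[where f=f], rule nth_equalityI, auto simp: nth_tl nth_Cons' simp del: upt_Suc)
  qed
  have "rc (Suc k) (\<lambda>ys. \<Sum>j<ys ! 0. f (j # tl ys))"
    by (rule rc_prim[where f = "\<lambda>xs. 0" and g = "\<lambda>ys. ys ! 1 + f (ys ! 0 # tl (tl ys))"])
       (auto intro!: rc_add rc_proj rc_zero f2)
  from rc_cons[OF this assms(2)] show ?thesis by simp
qed

lemma rc_prod:
  assumes "rc (Suc k) f" "rc k g"
  shows "rc k (\<lambda>xs. \<Prod>j<g xs. f (j # xs))"
proof -
  have f2: "rc (Suc (Suc k)) (\<lambda>ys. f (ys ! 0 # tl (tl ys)))"
  proof -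
    have "rc (Suc (Suc k)) (\<lambda>ys. f (map (\<lambda>i. ys ! (if i = 0 then 0 else Suc i)) [0..<Suc k]))"
      by (rule rc_reindex[OF assms(1)]) auto
    then show ?thesis
      by (rule rc_cong) (rule arg_cong[where f=f], rule nth_equalityI, auto simp: nth_tl nth_Cons' simp del: upt_Suc)
  qed
  have "rc (Suc k) (\<lambda>ys. \<Prod>j<ys ! 0. f (j # tl ys))"
    by (rule rc_prim[where f = "\<lambda>xs. 1" and g = "\<lambda>ys. ys ! 1 * f (ys ! 0 # tl (tl ys))"])
       (auto intro!: rc_mult rc_proj rc_const f2)
  from rc_cons[OF this assms(2)] show ?thesis by simp
qed

lemma rc_of_computable1: "computable1 f \<Longrightarrow> rc k g \<Longrightarrow> rc k (\<lambda>xs. f (g xs))"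
proof -
  assume "computable1 f" "rc k g"
  obtain r where r: "\<forall>n. eval r [n] (f n)" using \<open>computable1 f\<close> unfolding computable1_def by auto
  have "rc (Suc 0) (\<lambda>xs. f (xs ! 0))" unfolding rc_def
  proof (intro exI allI impI)
    fix xs :: "nat list" assume "length xs = Suc 0"
    then obtain x where "xs = [x]" by (cases xs) auto
    then show "eval r xs (f (xs ! 0))" using r by auto
  qed
  from rc_comp1[OF this \<open>rc k g\<close>] show ?thesis by simp
qed

lemma computable1_of_rc: "rc (Suc 0) (\<lambda>xs. f (xs ! 0)) \<Longrightarrow> computable1 f"
  unfolding rc_def computable1_def by (metis length_Cons list.size(3) nth_Cons_0 One_nat_def)



definition hv :: "(nat \<Rightarrow> nat) \<Rightarrow> (nat \<Rightarrow> nat) \<Rightarrow> (nat \<Rightarrow> nat) \<Rightarrow> nat \<Rightarrow> nat \<Rightarrow> nat" where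
  "hv init step halt i k = halt ((step ^^ k) (init i))"

definition Ef :: "(nat \<Rightarrow> nat) \<Rightarrow> (nat \<Rightarrow> nat) \<Rightarrow> (nat \<Rightarrow> nat) \<Rightarrow> nat \<Rightarrow> nat \<Rightarrow> nat" where
  "Ef init step halt i k = (if hv init step halt i k = 0 then 0
      else if (\<Sum>k'<k. hv init step halt i k') = 0 then 1 else 0)"

definition Pm :: "nat \<Rightarrow> nat \<Rightarrow> nat" where
  "Pm t T = (\<Prod>i<T. if Suc i = t then 1 else Suc i)"

definition anum :: "(nat \<Rightarrow> nat) \<Rightarrow> (nat \<Rightarrow> nat) \<Rightarrow> (nat \<Rightarrow> nat) \<Rightarrow> nat \<Rightarrow> nat" where
  "anum init step halt n = (\<Sum>j<Suc n. \<Sum>k<2 ^ Suc n.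
      Ef init step halt (Suc j) (Suc k) * 2 ^ (n - j) * Pm (Suc k) (2 ^ Suc n))"

definition dden :: "nat \<Rightarrow> nat" where
  "dden n = 2 ^ Suc n * (\<Prod>i<2 ^ Suc n. Suc i)"

section \<open>Computability\<close>

lemma rc_iter:
  assumes "computable1 step"
  shows "rc (Suc (Suc 0)) (\<lambda>xs. (step ^^ (xs ! 0)) (xs ! 1))"
  by (rule rc_prim[where f = "\<lambda>xs. xs ! 0" and g = "\<lambda>ys. step (ys ! 1)" and k = "Suc 0"])
     (auto intro!: rc_proj rc_of_computable1[OF assms])

lemma rc_hv:
  assumes "computable1 init" "computable1 step" "computable1 halt" "rc k g1" "rc k g2"
  shows "rc k (\<lambda>xs. hv init step halt (g1 xs) (g2 xs))"
proof -
  have "rc k (\<lambda>xs. halt ((\<lambda>ys. (step ^^ (ys ! 0)) (ys ! 1)) [g2 xs, init (g1 xs)]))"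
    by (intro rc_of_computable1[OF assms(3)] rc_comp2[OF rc_iter[OF assms(2)]] assms(5)
        rc_of_computable1[OF assms(1)] assms(4))
  then show ?thesis by (simp add: hv_def)
qed

lemma rc_Ef:
  assumes "computable1 init" "computable1 step" "computable1 halt" "rc k g1" "rc k g2"
  shows "rc k (\<lambda>xs. Ef init step halt (g1 xs) (g2 xs))"
proof -
  have s: "rc (Suc (Suc 0)) (\<lambda>xs. \<Sum>j<xs ! 1. (\<lambda>ys. hv init step halt (ys ! 1) (ys ! 0)) (j # xs))"
    by (intro rc_sum rc_hv assms(1-3) rc_proj) auto
  have "rc (Suc (Suc 0)) (\<lambda>xs. if hv init step halt (xs ! 0) (xs ! 1) = 0 then 0
      else if (\<Sum>j<xs ! 1. (\<lambda>ys. hv init step halt (ys ! 1) (ys ! 0)) (j # xs)) = 0 then 1 else 0)"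
    by (intro rc_if_eq rc_hv assms(1-3) rc_proj rc_const s) auto
  then have "rc (Suc (Suc 0)) (\<lambda>xs. Ef init step halt (xs ! 0) (xs ! 1))"
    by (rule rc_cong) (simp add: Ef_def)
  from rc_comp2[OF this assms(4,5)] show ?thesis by simp
qed

lemma rc_Pm:
  assumes "rc k g1" "rc k g2"
  shows "rc k (\<lambda>xs. Pm (g1 xs) (g2 xs))"
proof -
  have "rc (Suc (Suc 0)) (\<lambda>xs. \<Prod>j<xs ! 1. (\<lambda>ys. if Suc (ys ! 0) = ys ! 1 then 1 else Suc (ys ! 0)) (j # xs))"
    by (intro rc_prod rc_if_eq rc_Suc rc_proj rc_const) auto
  then have "rc (Suc (Suc 0)) (\<lambda>xs. Pm (xs ! 0) (xs ! 1))"
    by (rule rc_cong) (simp add: Pm_def cong: if_cong)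
  from rc_comp2[OF this assms] show ?thesis by simp
qed

lemma computable_anum:
  assumes "computable1 init" "computable1 step" "computable1 halt"
  shows "computable1 (anum init step halt)"
proof -
  have body: "rc (Suc (Suc (Suc 0))) (\<lambda>zs. Ef init step halt (Suc (zs ! 1)) (Suc (zs ! 0)) * 2 ^ (zs ! 2 - zs ! 1)
      * Pm (Suc (zs ! 0)) (2 ^ Suc (zs ! 2)))"
    by (intro rc_mult rc_Ef assms rc_Suc rc_proj rc_pow2 rc_sub rc_Pm) auto
  have inner: "rc (Suc (Suc 0)) (\<lambda>ys. \<Sum>k<2 ^ Suc (ys ! 1). Ef init step halt (Suc (ys ! 0)) (Suc k) * 2 ^ (ys ! 1 - ys ! 0)
      * Pm (Suc k) (2 ^ Suc (ys ! 1)))"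
    by (rule rc_cong[OF rc_sum[OF body rc_pow2[OF rc_Suc[OF rc_proj[of 1 "Suc (Suc 0)"]]]]]) auto
  have "rc (Suc 0) (\<lambda>xs. anum init step halt (xs ! 0))"
    by (rule rc_cong[OF rc_sum[OF inner rc_Suc[OF rc_proj[of 0 "Suc 0"]]]]) (auto simp: anum_def)
  then show ?thesis by (rule computable1_of_rc)
qed

lemma computable_dden: "computable1 dden"
proof -
  have "rc (Suc 0) (\<lambda>xs. dden (xs ! 0))"
    unfolding dden_def
    by (rule rc_mult[OF rc_pow2[OF rc_Suc[OF rc_proj]] rc_cong[OF rc_prod[OF rc_Suc[OF rc_proj[of 0 "Suc (Suc 0)"]]
         rc_pow2[OF rc_Suc[OF rc_proj[of 0 "Suc 0"]]]]]]) auto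
  then show ?thesis by (rule computable1_of_rc)
qed

lemma computable_zero: "computable1 (\<lambda>_. 0)"
  by (rule computable1_of_rc) (rule rc_zero)



declare bin.simps[simp del]

lemma prog_code_snoc: "prog_code (s @ [b]) = 2 * prog_code s + (if b then 1 else 0)"
  by (simp add: prog_code_def)

lemma prog_code_ge1: "prog_code s \<ge> 1"
  by (induction s rule: rev_induct) (auto simp: prog_code_snoc, simp add: prog_code_def)

lemma bin_prog_code: "bin (prog_code s) = s"
proof (induction s rule: rev_induct)
  case Nil then show ?case by (simp add: prog_code_def bin.simps)
next
  case (snoc b s)
  have g: "prog_code s \<ge> 1" by (rule prog_code_ge1)
  have "bin (prog_code (s @ [b])) = bin (prog_code (s @ [b]) div 2) @ [odd (prog_code (s @ [b]))]"
    using g by (subst bin.simps) (auto simp: prog_code_snoc)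
  also have "prog_code (s @ [b]) div 2 = prog_code s" by (auto simp: prog_code_snoc)
  also have "odd (prog_code (s @ [b])) = b" by (auto simp: prog_code_snoc)
  finally show ?case using snoc by simp
qed

lemma prog_code_bin: "n \<ge> 1 \<Longrightarrow> prog_code (bin n) = n"
proof (induction n rule: bin.induct)
  case (1 n)
  show ?case
  proof (cases "n \<le> 1")
    case True then have "n = 1" using 1(2) by simp
    then show ?thesis by (subst bin.simps) (simp add: prog_code_def)
  next
    case False
    then have "prog_code (bin n) = prog_code (bin (n div 2) @ [odd n])" by (subst bin.simps) simp
    also have "\<dots> = 2 * (n div 2) + (if odd n then 1 else 0)"
      using 1(1) False by (simp add: prog_code_snoc)
    also have "\<dots> = n" by presburger
    finally show ?thesis .
  qed
qed

lemma htime_char: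
  assumes "i \<ge> 1"
  shows "htime init step halt (bin i) = enat t \<longleftrightarrow>
    hv init step halt i t \<noteq> 0 \<and> (\<forall>k<t. hv init step halt i k = 0)"
proof -
  have ha: "halts_after init step halt (bin i) k \<longleftrightarrow> hv init step halt i k \<noteq> 0" for k
    by (simp add: halts_after_def hv_def prog_code_bin[OF assms])
  show ?thesis
  proof
    assume h: "htime init step halt (bin i) = enat t"
    then have ex: "\<exists>k. halts_after init step halt (bin i) k"
      by (auto simp: htime_def split: if_splits)
    then have t: "t = (LEAST k. halts_after init step halt (bin i) k)"
      using h by (auto simp: htime_def)
    have "halts_after init step halt (bin i) t" using LeastI_ex[OF ex] t by simp
    moreover have "\<not> halts_after init step halt (bin i) k" if "k < t" for k
      using not_less_Least[of k "halts_after init step halt (bin i)"] t that by simp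
    ultimately show "hv init step halt i t \<noteq> 0 \<and> (\<forall>k<t. hv init step halt i k = 0)"
      using ha by blast
  next
    assume h: "hv init step halt i t \<noteq> 0 \<and> (\<forall>k<t. hv init step halt i k = 0)"
    then have ex: "\<exists>k. halts_after init step halt (bin i) k" using ha by auto
    have "(LEAST k. halts_after init step halt (bin i) k) = t"
      by (rule Least_equality) (use h ha in \<open>auto simp: not_less[symmetric]\<close>)
    then show "htime init step halt (bin i) = enat t" using ex by (simp add: htime_def)
  qed
qed

lemma Ef_eq:
  assumes "i \<ge> 1"
  shows "Ef init step halt i k = (if htime init step halt (bin i) = enat k then 1 else 0)"
  using htime_char[OF assms] by (simp add: Ef_def)

lemma Pm_big: "T < t \<Longrightarrow> Pm t T = fact T"
  by (induction T) (auto simp: Pm_def)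

lemma Pm_fact: "1 \<le> t \<Longrightarrow> t \<le> T \<Longrightarrow> t * Pm t T = fact T"
proof (induction T)
  case 0 then show ?case by simp
next
  case (Suc T)
  show ?case
  proof (cases "t = Suc T")
    case True
    then have "Pm t (Suc T) = Pm t T" by (simp add: Pm_def)
    then show ?thesis using True Pm_big[of T t] by (simp add: fact_Suc)
  next
    case False
    then have "Pm t (Suc T) = Pm t T * Suc T" by (simp add: Pm_def)
    moreover have "t * Pm t T = fact T" using Suc False by simp
    ultimately show ?thesis by (simp add: fact_Suc algebra_simps)
  qed
qed



lemma frac_aux: "(a::real) \<noteq> 0 \<Longrightarrow> F \<noteq> 0 \<Longrightarrow> a * (F / t) / (a * b * F) = 1 / (b * t)"
  by (simp add: field_simps)

lemma prod_Suc_fact: "(\<Prod>i<m. Suc i) = fact m"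
  by (induction m) (simp_all add: fact_Suc)

lemma dden_eq: "dden n = 2 ^ Suc n * fact (2 ^ Suc n)"
  by (simp only: dden_def prod_Suc_fact)

context
  fixes init step halt :: "nat \<Rightarrow> nat"
  assumes ge1: "\<forall>p. htime init step halt p \<ge> 1"
begin

definition "tm j = (case htime init step halt (bin (Suc j)) of
   enat k \<Rightarrow> (1/2) ^ Suc j / real k | \<infinity> \<Rightarrow> (0::real))"

definition "ct n j = (case htime init step halt (bin (Suc j)) of
   enat k \<Rightarrow> if k \<le> 2 ^ Suc n then (1/2) ^ Suc j / real k else 0 | \<infinity> \<Rightarrow> (0::real))"

lemma enat_ge1: "htime init step halt p = enat t \<Longrightarrow> t \<ge> 1"
  using ge1 by (metis enat_ord_simps(1) one_enat_def)

lemma inner_sum: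
  "(\<Sum>k<T. Ef init step halt (Suc j) (Suc k) * 2 ^ (n - j) * Pm (Suc k) T) =
   2 ^ (n - j) * (case htime init step halt (bin (Suc j)) of enat t \<Rightarrow> if t \<le> T then Pm t T else 0 | \<infinity> \<Rightarrow> 0)"
proof (cases "htime init step halt (bin (Suc j))")
  case (enat t)
  then have t1: "t \<ge> 1" by (rule enat_ge1)
  have "(\<Sum>k<T. Ef init step halt (Suc j) (Suc k) * 2 ^ (n - j) * Pm (Suc k) T) =
        (\<Sum>k<T. if k = t - 1 then 2 ^ (n - j) * Pm t T else 0)"
    using t1 enat by (intro sum.cong) (auto simp: Ef_eq)
  also have "\<dots> = (if t - 1 < T then 2 ^ (n - j) * Pm t T else 0)"
    by (simp add: sum.delta)
  finally show ?thesis using enat t1 by auto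
next
  case infinity
  then show ?thesis by (simp add: Ef_eq)
qed

lemma approx_eq: "real (anum init step halt n) / real (dden n) = (\<Sum>j<Suc n. ct n j)"
proof -
  define T :: nat where "T = 2 ^ Suc n"
  have T1: "T \<ge> 1" by (simp add: T_def)
  define X where "X j = (case htime init step halt (bin (Suc j)) of enat t \<Rightarrow> if t \<le> T then Pm t T else 0 | \<infinity> \<Rightarrow> 0)" for j
  have a: "anum init step halt n = (\<Sum>j<Suc n. 2 ^ (n - j) * X j)"
    unfolding anum_def X_def T_def[symmetric] by (simp add: inner_sum)
  have fpos: "(fact T :: real) > 0" by simp
  have each: "real (2 ^ (n - j) * X j) / (real T * fact T) = ct n j" if "j < Suc n" for j
  proof (cases "htime init step halt (bin (Suc j))")
    case (enat t)
    then have t1: "t \<ge> 1" by (rule enat_ge1)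
    show ?thesis
    proof (cases "t \<le> T")
      case True
      have pm: "real (Pm t T) = fact T / real t"
        using Pm_fact[OF t1 True] t1 by (simp add: field_simps) (metis of_nat_fact of_nat_mult)
      have p2: "real T = 2 ^ (n - j) * 2 ^ Suc j"
        using that unfolding T_def by (simp add: power_add[symmetric])
      have "real (2 ^ (n - j) * X j) / (real T * fact T) = 2 ^ (n - j) * (fact T / real t) / (2 ^ (n - j) * 2 ^ Suc j * fact T)"
      proof -
        have "real (2 ^ (n - j) * X j) = 2 ^ (n - j) * (fact T / real t)"
          using enat True by (simp add: X_def pm)
        then show ?thesis by (simp only: p2)
      qed
      also have "\<dots> = 1 / (2 ^ Suc j * real t)"
        using fpos by (intro frac_aux) auto
      also have "\<dots> = (1/2) ^ Suc j / real t"
        by (simp add: power_one_over)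
      finally show ?thesis using enat True by (simp add: ct_def T_def)
    next
      case False then show ?thesis using enat by (simp add: X_def ct_def T_def)
    qed
  next
    case infinity then show ?thesis by (simp add: X_def ct_def)
  qed
  have "real (anum init step halt n) / real (dden n) = (\<Sum>j<Suc n. real (2 ^ (n - j) * X j) / (real T * fact T))"
    unfolding a dden_eq T_def[symmetric] by (simp add: sum_divide_distrib add_divide_distrib del: sum.lessThan_Suc)
  also have "\<dots> = (\<Sum>j<Suc n. ct n j)" using each by (intro sum.cong) auto
  finally show ?thesis .
qed

lemma tm_nonneg: "0 \<le> tm j"
  by (auto simp: tm_def split: enat.splits)

lemma tm_le: "tm j \<le> (1/2) ^ Suc j"
proof (cases "htime init step halt (bin (Suc j))")
  case (enat t)
  then have "t \<ge> 1" by (rule enat_ge1)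
  then have "(1/2::real) ^ Suc j / real t \<le> (1/2) ^ Suc j / 1"
    by (intro divide_left_mono) auto
  then show ?thesis using enat by (simp add: tm_def)
qed (simp add: tm_def)

lemma geo_sums: "(\<lambda>j. (1/2::real) ^ Suc j) sums 1"
proof -
  have "(\<lambda>j. (1/2::real) * (1/2) ^ j) sums ((1/2) * (1 / (1 - 1/2)))"
    by (intro sums_mult geometric_sums) simp
  then show ?thesis by simp
qed

lemma summable_tm: "summable tm"
  by (rule summable_comparison_test'[OF sums_summable[OF geo_sums]]) (use tm_nonneg tm_le in auto)

lemma ct_bounds: "0 \<le> tm j - ct n j \<and> tm j - ct n j \<le> (1/2) ^ Suc j / 2 ^ Suc n"
proof (cases "htime init step halt (bin (Suc j))")
  case (enat t)
  show ?thesis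
  proof (cases "t \<le> 2 ^ Suc n")
    case True then show ?thesis using enat by (simp add: tm_def ct_def)
  next
    case False
    then have "real t \<ge> 2 ^ Suc n"
      by (metis le_cases not_le of_nat_le_iff of_nat_numeral of_nat_power)
    moreover have "(0::real) < 2 ^ Suc n" by simp
    ultimately have "(0::real) < real t * 2 ^ Suc n" by (intro mult_pos_pos) linarith+
    then have "(1/2::real) ^ Suc j / real t \<le> (1/2) ^ Suc j / 2 ^ Suc n"
      using \<open>real t \<ge> 2 ^ Suc n\<close> by (intro divide_left_mono) auto
    then show ?thesis using enat False by (simp add: tm_def ct_def)
  qed
qed (simp add: tm_def ct_def)

lemma partial_geo: "(\<Sum>j<N. (1/2::real) ^ Suc j) = 1 - (1/2) ^ N"
  by (induction N) (simp_all add: field_simps)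

lemma error_bound: "\<bar>(\<Sum>j<Suc n. ct n j) - suminf tm\<bar> \<le> (1/2) ^ n"
proof -
  define N where "N = Suc n"
  have split: "suminf tm = (\<Sum>m. tm (m + N)) + (\<Sum>j<N. tm j)"
    by (rule suminf_split_initial_segment[OF summable_tm])
  have gs: "(\<lambda>m. (1/2::real) ^ Suc N * (1/2) ^ m) sums ((1/2) ^ Suc N * (1 / (1 - 1/2)))"
    by (intro sums_mult geometric_sums) simp
  have tail: "(\<Sum>m. tm (m + N)) \<le> (1/2) ^ N"
  proof -
    have "(\<Sum>m. tm (m + N)) \<le> (\<Sum>m. (1/2::real) ^ Suc N * (1/2) ^ m)"
    proof (rule suminf_le)
      fix m show "tm (m + N) \<le> (1/2) ^ Suc N * (1/2) ^ m"
        using tm_le[of "m + N"] by (simp add: power_add mult_ac)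
    next
      show "summable (\<lambda>m. tm (m + N))" using summable_tm by (simp add: summable_iff_shift)
    next
      show "summable (\<lambda>m. (1/2::real) ^ Suc N * (1/2) ^ m)" using gs by (rule sums_summable)
    qed
    also have "\<dots> = (1/2) ^ N" using sums_unique[OF gs] by simp
    finally show ?thesis .
  qed
  have tail0: "0 \<le> (\<Sum>m. tm (m + N))"
    using summable_tm tm_nonneg by (intro suminf_nonneg) (auto simp: summable_iff_shift)
  have d: "(\<Sum>j<N. tm j) - (\<Sum>j<N. ct n j) = (\<Sum>j<N. tm j - ct n j)"
    by (simp add: sum_subtractf)
  have d0: "0 \<le> (\<Sum>j<N. tm j - ct n j)" using ct_bounds by (intro sum_nonneg) auto
  have "(\<Sum>j<N. tm j - ct n j) \<le> (\<Sum>j<N. (1/2) ^ Suc j / 2 ^ Suc n)"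
    using ct_bounds by (intro sum_mono) auto
  also have "\<dots> = (\<Sum>j<N. (1/2::real) ^ Suc j) / 2 ^ Suc n" by (simp add: sum_divide_distrib)
  also have "\<dots> \<le> 1 / 2 ^ Suc n"
    unfolding partial_geo by (intro divide_right_mono) auto
  finally have d1: "(\<Sum>j<N. tm j - ct n j) \<le> 1 / 2 ^ Suc n" .
  have eq: "(1/2::real) ^ n = 1 / 2 ^ Suc n + (1/2) ^ N"
    by (simp add: N_def field_simps)
  show ?thesis
    using split tail tail0 d d0 d1 eq unfolding N_def[symmetric] by linarith
qed

end



theorem mainTheorem1:
  fixes init step halt :: "nat \<Rightarrow> nat"
  assumes "computable1 init" and "computable1 step" and "computable1 halt"
    and "\<exists>p. htime init step halt p \<noteq> \<infinity>"
    and "\<exists>p. htime init step halt p = \<infinity>"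
    and "\<forall>p. htime init step halt p \<ge> 1"
  shows "0 < Upsilon init step halt \<and> Upsilon init step halt < 1
         \<and> computable_real (Upsilon init step halt)"
proof -
  note ge1 = assms(6)
  have U: "Upsilon init step halt = suminf (tm init step halt)"
    unfolding Upsilon_def tm_def[OF ge1, abs_def] by simp
  have summ: "summable (tm init step halt)" using summable_tm[OF ge1] .
  have nn: "\<And>j. 0 \<le> tm init step halt j" using tm_nonneg[OF ge1] .
  have binj: "bin (Suc (prog_code p - 1)) = p" for p
    using prog_code_ge1[of p] bin_prog_code[of p] by simp
  have pos: "0 < Upsilon init step halt"
  proof -
    obtain p where "htime init step halt p \<noteq> \<infinity>" using assms(4) by auto
    then obtain t where t: "htime init step halt p = enat t" by (cases "htime init step halt p") auto
    have t1: "t \<ge> 1" using enat_ge1[OF ge1 t] .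
    define j where "j = prog_code p - 1"
    have "tm init step halt j = (1/2) ^ Suc j / real t"
      using t binj[of p] by (simp add: tm_def[OF ge1] j_def)
    also have "\<dots> > 0" using t1 by simp
    finally show ?thesis unfolding U by (intro suminf_pos2[OF summ nn])
  qed
  have lt1: "Upsilon init step halt < 1"
  proof -
    obtain p where p: "htime init step halt p = \<infinity>" using assms(5) by auto
    define j where "j = prog_code p - 1"
    have z: "tm init step halt j = 0" using p binj[of p] by (simp add: tm_def[OF ge1] j_def)
    have gs: "summable (\<lambda>j. (1/2::real) ^ Suc j)" using sums_summable[OF geo_sums[OF ge1]] .
    have "0 < (\<Sum>j. (1/2::real) ^ Suc j - tm init step halt j)"
    proof (rule suminf_pos2)
      show "summable (\<lambda>j. (1/2::real) ^ Suc j - tm init step halt j)"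
        using gs summ by (rule summable_diff)
      show "0 \<le> (1/2::real) ^ Suc n - tm init step halt n" for n using tm_le[OF ge1, of n] by simp
      show "0 < (1/2::real) ^ Suc j - tm init step halt j" using z by simp
    qed
    also have "\<dots> = 1 - suminf (tm init step halt)"
      using suminf_diff[OF gs summ] sums_unique[OF geo_sums[OF ge1]] by simp
    finally show ?thesis unfolding U by simp
  qed
  have comp: "computable_real (Upsilon init step halt)"
    unfolding computable_real_def
  proof (intro exI conjI allI impI)
    show "computable1 (anum init step halt)" using computable_anum[OF assms(1-3)] .
    show "computable1 (\<lambda>_. 0)" by (rule computable_zero)
    show "computable1 dden" by (rule computable_dden)
    fix n :: nat assume "1 \<le> n"
    show "dden n > 0" by (simp add: dden_def)
    show "\<bar>(real (anum init step halt n) - real 0) / real (dden n) - Upsilon init step halt\<bar> \<le> (1/2) ^ n"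
      using approx_eq[OF ge1, of n] error_bound[OF ge1, of n] U by simp
  qed
  show ?thesis using pos lt1 comp by blast
qed

end
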